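(* Let $m^*\ge m_*>0$ and $K\ge1$. If $G,\tilde G\in\mathbb{R}^{n\times K}$ satisfy $m_*I_K\preceq\frac1nG^TG\preceq m^*I_K$ and $m_*I_K\preceq\frac1n\tilde G^T\tilde G\preceq m^*I_K$, then $$\|(G^TG)^{-1/2}-(\tilde G^T\tilde G)^{-1/2}\|_F\le L_1n^{-1}\|G-\tilde G\|_F,\qquad\|G(G^TG)^{-1/2}-\tilde G(\tilde G^T\tilde G)^{-1/2}\|_F\le L_2n^{-1/2}\|G-\tilde G\|_F,$$ where $L_1,L_2>0$ depend only on $(K,m_*,m^* )$.
   Context: $A^{-1/2}$ denotes the inverse of the symmetric positive definite square root of $A$; $\preceq$ is the Loewner order. *)

theory Defs
  imports "Jordan_Normal_Form.Matrix"
begin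

definition psd_mat :: "real mat \<Rightarrow> bool" where
  "psd_mat A \<longleftrightarrow> A \<in> carrier_mat (dim_row A) (dim_row A) \<and> transpose_mat A = A \<and>
     (\<forall>v \<in> carrier_vec (dim_row A). scalar_prod v (A *\<^sub>v v) \<ge> 0)"

definition loewner_le :: "real mat \<Rightarrow> real mat \<Rightarrow> bool" where
  "loewner_le A B \<longleftrightarrow> A \<in> carrier_mat (dim_row B) (dim_row B) \<and>
     B \<in> carrier_mat (dim_row B) (dim_row B) \<and> psd_mat (B - A)"

definition mat_sqrt :: "real mat \<Rightarrow> real mat" where
  "mat_sqrt A = (THE B. B \<in> carrier_mat (dim_row A) (dim_row A) \<and> psd_mat B \<and> B * B = A)"

definition mat_inv :: "real mat \<Rightarrow> real mat" where
  "mat_inv A = (THE B. B \<in> carrier_mat (dim_row A) (dim_row A) \<and>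
      A * B = 1\<^sub>m (dim_row A) \<and> B * A = 1\<^sub>m (dim_row A))"

definition inv_sqrt_mat :: "real mat \<Rightarrow> real mat" where
  "inv_sqrt_mat A = mat_inv (mat_sqrt A)"

definition frob_norm :: "real mat \<Rightarrow> real" where
  "frob_norm A = sqrt (\<Sum>i<dim_row A. \<Sum>j<dim_col A. (A $$ (i, j))\<^sup>2)"

end

theory Submission
  imports Defs "Jordan_Normal_Form.Char_Poly"
begin

lemma sprod_self_ge0: "(v::real vec) \<bullet> v \<ge> 0"
  by (simp add: scalar_prod_def sum_nonneg)

lemma sprod_self_pos: assumes "(v::real vec) \<in> carrier_vec n" "v \<noteq> 0\<^sub>v n"
  shows "v \<bullet> v > 0"
proof -
  obtain i where i: "i < n" "v $ i \<noteq> 0" using assms by (metis eq_vecI carrier_vecD index_zero_vec)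
  have "(v$i) * (v$i) \<le> (\<Sum>j\<in>{0..<n}. v$j * v$j)"
    by (rule member_le_sum) (use i in auto)
  moreover have "(v$i) * (v$i) > 0" using i by (auto simp: zero_less_mult_iff linorder_neq_iff)
  ultimately show ?thesis using assms by (simp add: scalar_prod_def)
qed

lemma sym_eigvec:
  fixes A :: "real mat"
  assumes A: "A \<in> carrier_mat n n" and sym: "transpose_mat A = A" and n: "n > 0"
  shows "\<exists>v l. v \<in> carrier_vec n \<and> v \<noteq> 0\<^sub>v n \<and> A *\<^sub>v v = l \<cdot>\<^sub>v v"
proof -
  define Ac where "Ac = map_mat complex_of_real A"
  have Ac: "Ac \<in> carrier_mat n n" using A by (simp add: Ac_def)
  obtain as where cp: "char_poly Ac = (\<Prod>a\<leftarrow>as. [:-a,1:])" and len: "length as = n"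
    using char_poly_factorized[OF Ac] by blast
  obtain mu where mu: "mu \<in> set as" using len n by (cases as) auto
  have "poly (char_poly Ac) mu = 0" unfolding cp poly_prod_list
    using mu by (auto simp: prod_list_zero_iff)
  then have "eigenvalue Ac mu" using eigenvalue_root_char_poly[OF Ac] by simp
  then obtain w where w: "w \<in> carrier_vec n" "w \<noteq> 0\<^sub>v n" "Ac *\<^sub>v w = mu \<cdot>\<^sub>v w"
    unfolding eigenvalue_def eigenvector_def using Ac by auto
  define a where "a = vec n (\<lambda>i. Re (w$i))"
  define b where "b = vec n (\<lambda>i. Im (w$i))"
  have ab: "a \<in> carrier_vec n" "b \<in> carrier_vec n" by (auto simp: a_def b_def)
  have comp: "(\<Sum>j<n. of_real (A$$(i,j)) * w$j) = mu * w$i" if i: "i < n" for i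
  proof -
    have "(Ac *\<^sub>v w) $ i = mu * w $ i" using w i by simp
    then show ?thesis using i A w Ac
      by (auto simp: Ac_def scalar_prod_def row_def lessThan_atLeast0)
  qed
  have Aa: "A *\<^sub>v a = Re mu \<cdot>\<^sub>v a - Im mu \<cdot>\<^sub>v b"
  proof (rule eq_vecI)
    fix i assume i: "i < dim_vec (Re mu \<cdot>\<^sub>v a - Im mu \<cdot>\<^sub>v b)"
    hence i: "i < n" using ab by simp
    have "Re (\<Sum>j<n. of_real (A$$(i,j)) * w$j) = Re (mu * w$i)" using comp[OF i] by simp
    then show "(A *\<^sub>v a) $ i = (Re mu \<cdot>\<^sub>v a - Im mu \<cdot>\<^sub>v b) $ i"
      using i A ab by (auto simp: a_def b_def scalar_prod_def row_def lessThan_atLeast0)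
  qed (use A ab in auto)
  have Ab: "A *\<^sub>v b = Re mu \<cdot>\<^sub>v b + Im mu \<cdot>\<^sub>v a"
  proof (rule eq_vecI)
    fix i assume i: "i < dim_vec (Re mu \<cdot>\<^sub>v b + Im mu \<cdot>\<^sub>v a)"
    hence i: "i < n" using ab by simp
    have "Im (\<Sum>j<n. of_real (A$$(i,j)) * w$j) = Im (mu * w$i)" using comp[OF i] by simp
    then show "(A *\<^sub>v b) $ i = (Re mu \<cdot>\<^sub>v b + Im mu \<cdot>\<^sub>v a) $ i"
      using i A ab by (auto simp: a_def b_def scalar_prod_def row_def lessThan_atLeast0 algebra_simps)
  qed (use A ab in auto)
  have "b \<bullet> (A *\<^sub>v a) = a \<bullet> (A *\<^sub>v b)"
    using transpose_vec_mult_scalar[OF A ab(1) ab(2)] sym ab A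
    by (metis comm_scalar_prod mult_mat_vec_carrier)
  then have "Re mu * (b \<bullet> a) - Im mu * (b \<bullet> b) = Re mu * (a \<bullet> b) + Im mu * (a \<bullet> a)"
    unfolding Aa Ab using ab
    by (simp add: scalar_prod_minus_distrib scalar_prod_add_distrib)
  then have "Im mu * (a \<bullet> a + b \<bullet> b) = 0" using ab comm_scalar_prod[OF ab(1) ab(2)]
    by (simp add: algebra_simps)
  moreover have "a \<bullet> a + b \<bullet> b > 0"
  proof -
    obtain i where i: "i < n" "w $ i \<noteq> 0" using w by (metis eq_vecI carrier_vecD index_zero_vec)
    then have "Re (w$i) \<noteq> 0 \<or> Im (w$i) \<noteq> 0" using complex_eqI by force
    then have "a $ i \<noteq> 0 \<or> b $ i \<noteq> 0" using i by (simp add: a_def b_def)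
    then have "a \<noteq> 0\<^sub>v n \<or> b \<noteq> 0\<^sub>v n" using i by auto
    then show ?thesis using ab sprod_self_pos[of a n] sprod_self_pos[of b n] sprod_self_ge0[of a] sprod_self_ge0[of b]
      by linarith
  qed
  ultimately have im0: "Im mu = 0" by simp
  show ?thesis
  proof (cases "a = 0\<^sub>v n")
    case True
    then have "b \<noteq> 0\<^sub>v n" using \<open>a \<bullet> a + b \<bullet> b > 0\<close> by auto
    moreover have "Re mu \<cdot>\<^sub>v b + 0 \<cdot>\<^sub>v a = Re mu \<cdot>\<^sub>v b" using ab by auto
    ultimately show ?thesis using Ab im0 ab by metis
  next
    case False
    moreover have "Re mu \<cdot>\<^sub>v a - 0 \<cdot>\<^sub>v b = Re mu \<cdot>\<^sub>v a" using ab by auto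
    ultimately show ?thesis using Aa im0 ab by metis
  qed
qed

lemma householder:
  fixes v :: "real vec"
  assumes v: "v \<in> carrier_vec N" "v \<bullet> v = 1" and N: "0 < N"
  shows "\<exists>H. H \<in> carrier_mat N N \<and> transpose_mat H = H \<and> H * H = 1\<^sub>m N \<and> col H 0 = v"
proof -
  define u where "u = v - unit_vec N 0"
  define c where "c = 2 / (u \<bullet> u)"
  define H where "H = mat N N (\<lambda>(i,j). (if i = j then 1 else 0) - c * (u$i * u$j))"
  have u: "u \<in> carrier_vec N" using v by (simp add: u_def)
  have ui: "u $ i = v $ i - (if i = 0 then 1 else 0)" if "i < N" for i
    using that v by (simp add: u_def)
  have uu: "u \<bullet> u = 2 - 2 * v $ 0"
  proof -
    have "u \<bullet> u = (\<Sum>k\<in>{0..<N}. v$k * v$k - 2 * (if k = 0 then v$k else 0) + (if k = 0 then 1 else 0))"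
      using u by (auto simp: scalar_prod_def ui algebra_simps intro!: sum.cong)
    also have "\<dots> = v \<bullet> v - 2 * v$0 + 1"
      using v N by (simp add: scalar_prod_def sum.distrib sum_subtractf sum_distrib_left[symmetric])
    finally show ?thesis using v by simp
  qed
  have cc: "c * c * (u \<bullet> u) = 2 * c"
    by (cases "u \<bullet> u = 0") (auto simp: c_def)
  have HC: "H \<in> carrier_mat N N" by (simp add: H_def)
  have HT: "transpose_mat H = H" by (rule eq_matI) (auto simp: H_def)
  have HH: "H * H = 1\<^sub>m N"
  proof (rule eq_matI)
    fix i j assume ij: "i < dim_row (1\<^sub>m N)" "j < dim_col (1\<^sub>m N)"
    hence i: "i < N" and j: "j < N" by auto
    have "(H * H) $$ (i,j) = (\<Sum>k\<in>{0..<N}. ((if i = k then 1 else 0) - c * (u$i * u$k)) *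
           ((if k = j then 1 else 0) - c * (u$k * u$j)))"
      using i j by (simp add: H_def scalar_prod_def row_def col_def)
    also have "\<dots> = (\<Sum>k\<in>{0..<N}. (if i = k then (if k = j then 1 else 0) else 0)
        - c * u$j * (if i = k then u$k else 0) - c * u$i * (if k = j then u$k else 0)
        + c * c * u$i * u$j * (u$k * u$k))"
      by (rule sum.cong) (auto simp: algebra_simps)
    also have "\<dots> = (\<Sum>k\<in>{0..<N}. (if i = k then (if k = j then 1 else 0) else 0))
        - c * u$j * (\<Sum>k\<in>{0..<N}. (if i = k then u$k else 0))
        - c * u$i * (\<Sum>k\<in>{0..<N}. (if k = j then u$k else 0))
        + c * c * u$i * u$j * (\<Sum>k\<in>{0..<N}. u$k * u$k)"
      by (simp only: sum.distrib sum_subtractf sum_distrib_left)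
    also have "\<dots> = (if i = j then 1 else 0) - 2 * c * u$i * u$j + c * c * (u \<bullet> u) * u$i * u$j"
      using i j u by (simp add: scalar_prod_def)
    also have "\<dots> = (if i = j then 1 else 0)" using cc by simp
    finally show "(H * H) $$ (i,j) = 1\<^sub>m N $$ (i,j)" using i j by simp
  qed (auto simp: H_def)
  have colH: "col H 0 = v"
  proof (cases "v $ 0 = 1")
    case True
    then have "u \<bullet> u = 0" using uu by simp
    then have "u = 0\<^sub>v N" using sprod_self_pos[OF u] by force
    then have "v = unit_vec N 0"
      by (intro eq_vecI) (use v ui in \<open>auto simp: unit_vec_def\<close>)
    moreover have "c = 0" using \<open>u \<bullet> u = 0\<close> by (simp add: c_def)
    ultimately show ?thesis using N by (auto simp: H_def col_def)
  next
    case False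
    have cu0: "c * u $ 0 = -1" using False N by (simp add: c_def uu ui field_simps)
    show ?thesis
    proof (rule eq_vecI)
      fix i assume "i < dim_vec v"
      hence i: "i < N" using v by simp
      have "col H 0 $ i = (if i = 0 then 1 else 0) - (c * u $ 0) * u $ i" using i N by (simp add: H_def col_def)
      also have "\<dots> = v $ i" using cu0 ui[OF i] by simp
      finally show "col H 0 $ i = v $ i" .
    qed (use v N in \<open>auto simp: H_def\<close>)
  qed
  show ?thesis using HC HT HH colH by blast
qed

lemma assoc4:
  assumes "A \<in> carrier_mat n n" "B \<in> carrier_mat n n" "C \<in> carrier_mat n n" "D \<in> carrier_mat n n"
  shows "A * B * (C * D) = A * (B * C) * D"
  using assms by (simp add: assoc_mult_mat[of _ n n _ n _ n])

lemma assoc5: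
  assumes "A \<in> carrier_mat n n" "B \<in> carrier_mat n n" "C \<in> carrier_mat n n" "D \<in> carrier_mat n n"
    "E \<in> carrier_mat n n"
  shows "A * B * C * (D * E) = A * (B * C * D) * E"
  using assms by (simp add: assoc_mult_mat[of _ n n _ n _ n])

lemma spectral:
  fixes A :: "real mat"
  shows "A \<in> carrier_mat n n \<Longrightarrow> transpose_mat A = A \<Longrightarrow>
    \<exists>Q D. Q \<in> carrier_mat n n \<and> D \<in> carrier_mat n n \<and> transpose_mat Q * Q = 1\<^sub>m n \<and>
      Q * transpose_mat Q = 1\<^sub>m n \<and> diagonal_mat D \<and> A = Q * D * transpose_mat Q"
proof (induction n arbitrary: A)
  case 0
  then show ?case
    by (intro exI[of _ "1\<^sub>m 0"] exI[of _ A]) (auto simp: diagonal_mat_def)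
next
  case (Suc m)
  note A = Suc.prems(1) and sym = Suc.prems(2)
  obtain v0 l where v0: "v0 \<in> carrier_vec (Suc m)" "v0 \<noteq> 0\<^sub>v (Suc m)" "A *\<^sub>v v0 = l \<cdot>\<^sub>v v0"
    using sym_eigvec[OF A sym] by blast
  have pos: "v0 \<bullet> v0 > 0" using sprod_self_pos[OF v0(1,2)] .
  define v where "v = (1 / sqrt (v0 \<bullet> v0)) \<cdot>\<^sub>v v0"
  have v: "v \<in> carrier_vec (Suc m)" using v0 by (simp add: v_def)
  have vv: "v \<bullet> v = 1" using pos v0
    by (simp add: v_def smult_scalar_prod_distrib[of _ "Suc m"] scalar_prod_smult_distrib[of _ "Suc m"])
  have Av: "A *\<^sub>v v = l \<cdot>\<^sub>v v" using v0 A
    by (simp add: v_def mult_mat_vec[OF A v0(1)] smult_smult_assoc mult.commute)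
  obtain H where H: "H \<in> carrier_mat (Suc m) (Suc m)" "transpose_mat H = H" "H * H = 1\<^sub>m (Suc m)"
      "col H 0 = v"
    using householder[OF v vv] by auto
  define B where "B = H * A * H"
  have B: "B \<in> carrier_mat (Suc m) (Suc m)" using H A by (simp add: B_def)
  have BT: "transpose_mat B = B"
  proof -
    have 1: "transpose_mat (H * A * H) = transpose_mat H * transpose_mat (H * A)"
      by (rule transpose_mult) (use H A in auto)
    have 2: "transpose_mat (H * A) = transpose_mat A * transpose_mat H"
      by (rule transpose_mult) (use H A in auto)
    have 3: "H * (A * H) = H * A * H" using H A by (simp add: assoc_mult_mat[of _ "Suc m" "Suc m"])
    show ?thesis unfolding B_def 1 2 using H sym 3 by simp
  qed
  have Hv: "H *\<^sub>v v = unit_vec (Suc m) 0"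
  proof -
    have "col (H * H) 0 = H *\<^sub>v col H 0" by (rule col_mult2) (use H in auto)
    then show ?thesis using H by simp
  qed
  have colB: "col B 0 = l \<cdot>\<^sub>v unit_vec (Suc m) 0"
  proof -
    have "col B 0 = (H * A) *\<^sub>v col H 0" unfolding B_def by (rule col_mult2) (use H A in auto)
    also have "\<dots> = (H * A) *\<^sub>v v" using H by simp
    also have "\<dots> = H *\<^sub>v (A *\<^sub>v v)" using H A v by (simp add: assoc_mult_mat_vec)
    also have "\<dots> = l \<cdot>\<^sub>v unit_vec (Suc m) 0" using Av Hv H v by (simp add: mult_mat_vec)
    finally show ?thesis .
  qed
  have Bi0: "B $$ (i, 0) = (if i = 0 then l else 0)" if "i < Suc m" for i
  proof -
    have "B $$ (i, 0) = col B 0 $ i" using B that by simp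
    then show ?thesis using colB that by simp
  qed
  have B0j: "B $$ (0, j) = (if j = 0 then l else 0)" if "j < Suc m" for j
  proof -
    have "B $$ (0, j) = transpose_mat B $$ (j, 0)" using B that by simp
    then show ?thesis using BT Bi0[OF that] by simp
  qed
  define B4 where "B4 = mat m m (\<lambda>(i,j). B $$ (i+1, j+1))"
  define L where "L = mat 1 1 (\<lambda>_. l)"
  have B4: "B4 \<in> carrier_mat m m" by (simp add: B4_def)
  have L: "L \<in> carrier_mat 1 1" by (simp add: L_def)
  have B4T: "transpose_mat B4 = B4"
  proof (rule eq_matI)
    fix i j assume "i < dim_row B4" "j < dim_col B4"
    then have ij: "i < m" "j < m" by (auto simp: B4_def)
    have "B $$ (j+1, i+1) = transpose_mat B $$ (i+1, j+1)" using B ij by simp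
    then show "transpose_mat B4 $$ (i, j) = B4 $$ (i, j)" using BT ij by (simp add: B4_def)
  qed (auto simp: B4_def)
  have Bblock: "B = four_block_mat L (0\<^sub>m 1 m) (0\<^sub>m m 1) B4"
  proof (rule eq_matI)
    fix i j assume "i < dim_row (four_block_mat L (0\<^sub>m 1 m) (0\<^sub>m m 1) B4)"
      "j < dim_col (four_block_mat L (0\<^sub>m 1 m) (0\<^sub>m m 1) B4)"
    then have ij: "i < Suc m" "j < Suc m" using L B4 by auto
    show "B $$ (i, j) = four_block_mat L (0\<^sub>m 1 m) (0\<^sub>m m 1) B4 $$ (i, j)"
      using ij L B4 Bi0 B0j by (cases i; cases j) (auto simp: L_def B4_def)
  qed (use B L B4 in auto)
  obtain Q' D' where Q': "Q' \<in> carrier_mat m m" "D' \<in> carrier_mat m m"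
     "transpose_mat Q' * Q' = 1\<^sub>m m" "Q' * transpose_mat Q' = 1\<^sub>m m" "diagonal_mat D'"
     "B4 = Q' * D' * transpose_mat Q'"
    using Suc.IH[OF B4 B4T] by blast
  define F where "F = four_block_mat (1\<^sub>m 1) (0\<^sub>m 1 m) (0\<^sub>m m 1) Q'"
  define D where "D = four_block_mat L (0\<^sub>m 1 m) (0\<^sub>m m 1) D'"
  have F: "F \<in> carrier_mat (Suc m) (Suc m)"
    using Q' four_block_carrier_mat[of "1\<^sub>m 1" 1 1 Q' m m] by (simp add: F_def)
  have D: "D \<in> carrier_mat (Suc m) (Suc m)"
    using Q' L four_block_carrier_mat[of L 1 1 D' m m] by (simp add: D_def)
  have FT: "transpose_mat F = four_block_mat (1\<^sub>m 1) (0\<^sub>m 1 m) (0\<^sub>m m 1) (transpose_mat Q')"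
    unfolding F_def by (subst transpose_four_block_mat) (use Q' in auto)
  have FTF: "transpose_mat F * F = 1\<^sub>m (Suc m)"
    unfolding FT using Q' by (simp add: F_def mult_four_block_mat[of _ 1 1 _ m _ m _ _ 1 _ m])
  have FFT: "F * transpose_mat F = 1\<^sub>m (Suc m)"
    unfolding FT using Q' by (simp add: F_def mult_four_block_mat[of _ 1 1 _ m _ m _ _ 1 _ m])
  have FDF: "F * D * transpose_mat F = B"
    unfolding FT Bblock using Q' L
    by (simp add: F_def D_def mult_four_block_mat[of _ 1 1 _ m _ m _ _ 1 _ m])
  define Q where "Q = H * F"
  have Q: "Q \<in> carrier_mat (Suc m) (Suc m)" using H F by (simp add: Q_def)
  have QT: "transpose_mat Q = transpose_mat F * H" using H F by (simp add: Q_def transpose_mult)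
  have "transpose_mat Q * Q = 1\<^sub>m (Suc m)"
  proof -
    have "transpose_mat Q * Q = transpose_mat F * (H * H) * F"
      unfolding QT unfolding Q_def by (rule assoc4) (use H F in auto)
    then show ?thesis using H F FTF by simp
  qed
  moreover have "Q * transpose_mat Q = 1\<^sub>m (Suc m)"
  proof -
    have "Q * transpose_mat Q = H * (F * transpose_mat F) * H"
      unfolding QT unfolding Q_def by (rule assoc4) (use H F in auto)
    then show ?thesis using H F FFT by simp
  qed
  moreover have "A = Q * D * transpose_mat Q"
  proof -
    have "Q * D * transpose_mat Q = H * (F * D * transpose_mat F) * H"
      unfolding QT unfolding Q_def by (rule assoc5) (use H F D in auto)
    also have "\<dots> = (H * H) * A * (H * H)"
      unfolding FDF B_def using H(1) A by (simp add: assoc_mult_mat[of _ "Suc m" "Suc m" _ "Suc m" _ "Suc m"])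
    finally show ?thesis using H A by simp
  qed
  moreover have "diagonal_mat D"
    using Q'(5) Q' L unfolding diagonal_mat_def D_def by (auto simp: L_def)
  ultimately show ?case using Q D by blast
qed

lemma cs_sum:
  fixes f g :: "'a \<Rightarrow> real"
  shows "(\<Sum>i\<in>A. f i * g i)\<^sup>2 \<le> (\<Sum>i\<in>A. (f i)\<^sup>2) * (\<Sum>i\<in>A. (g i)\<^sup>2)"
proof -
  have e1: "(\<Sum>i\<in>A. \<Sum>j\<in>A. (f i)\<^sup>2 * (g j)\<^sup>2) = (\<Sum>i\<in>A. (f i)\<^sup>2) * (\<Sum>i\<in>A. (g i)\<^sup>2)"
    by (simp add: sum_product)
  have e2: "(\<Sum>i\<in>A. \<Sum>j\<in>A. (f j)\<^sup>2 * (g i)\<^sup>2) = (\<Sum>i\<in>A. (f i)\<^sup>2) * (\<Sum>i\<in>A. (g i)\<^sup>2)"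
    unfolding e1[symmetric] by (rule sum.swap)
  have e3: "(\<Sum>i\<in>A. \<Sum>j\<in>A. (f i * g i) * (f j * g j)) = (\<Sum>i\<in>A. f i * g i)\<^sup>2"
    by (simp add: sum_product power2_eq_square)
  have "0 \<le> (\<Sum>i\<in>A. \<Sum>j\<in>A. (f i * g j - f j * g i)\<^sup>2)" by (intro sum_nonneg) auto
  also have "\<dots> = (\<Sum>i\<in>A. \<Sum>j\<in>A. (f i)\<^sup>2 * (g j)\<^sup>2 + (f j)\<^sup>2 * (g i)\<^sup>2 - 2 * ((f i * g i) * (f j * g j)))"
    by (intro sum.cong refl) (simp add: power2_eq_square algebra_simps)
  also have "\<dots> = (\<Sum>i\<in>A. \<Sum>j\<in>A. (f i)\<^sup>2 * (g j)\<^sup>2) + (\<Sum>i\<in>A. \<Sum>j\<in>A. (f j)\<^sup>2 * (g i)\<^sup>2)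
       - 2 * (\<Sum>i\<in>A. \<Sum>j\<in>A. (f i * g i) * (f j * g j))"
    by (simp only: sum.distrib sum_subtractf sum_distrib_left)
  finally show ?thesis unfolding e1 e2 e3 by simp
qed

definition fsq :: "real mat \<Rightarrow> real" where
  "fsq X = (\<Sum>i<dim_row X. \<Sum>j<dim_col X. (X$$(i,j))\<^sup>2)"
definition fip :: "real mat \<Rightarrow> real mat \<Rightarrow> real" where
  "fip Y X = (\<Sum>i<dim_row X. \<Sum>j<dim_col X. Y$$(i,j) * X$$(i,j))"

lemma frob_fsq: "frob_norm X = sqrt (fsq X)" by (simp add: frob_norm_def fsq_def)

lemma fsq_ge0: "fsq X \<ge> 0" by (simp add: fsq_def sum_nonneg)

lemma fsq_fip: "fsq X = fip X X" by (simp add: fsq_def fip_def power2_eq_square)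

lemma fip_cs:
  assumes "Y \<in> carrier_mat r c" "X \<in> carrier_mat r c"
  shows "(fip Y X)\<^sup>2 \<le> fsq Y * fsq X"
proof -
  have "fip Y X = (\<Sum>p\<in>{..<r}\<times>{..<c}. Y$$p * X$$p)"
    using assms by (simp add: fip_def sum.cartesian_product)
  moreover have "fsq Y = (\<Sum>p\<in>{..<r}\<times>{..<c}. (Y$$p)\<^sup>2)" "fsq X = (\<Sum>p\<in>{..<r}\<times>{..<c}. (X$$p)\<^sup>2)"
    using assms by (simp_all add: fsq_def sum.cartesian_product)
  ultimately show ?thesis using cs_sum[of "\<lambda>p. Y$$p" "\<lambda>p. X$$p"] by simp
qed

lemma fip_add:
  assumes "Y1 \<in> carrier_mat r c" "Y2 \<in> carrier_mat r c" "X \<in> carrier_mat r c"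
  shows "fip (Y1 + Y2) X = fip Y1 X + fip Y2 X"
  using assms by (simp add: fip_def sum.distrib algebra_simps)

lemma fip_transpose:
  assumes "X \<in> carrier_mat r c" "Y \<in> carrier_mat r c"
  shows "fip (transpose_mat Y) (transpose_mat X) = fip Y X"
  using assms unfolding fip_def by (simp add: sum.swap[of _ "{..<r}"])

lemma fsq_transpose: "fsq (transpose_mat X) = fsq X"
  unfolding fsq_def by (simp add: sum.swap[of _ "{..<dim_row X}"])

lemma fip_cols:
  assumes "X \<in> carrier_mat r c" "Y \<in> carrier_mat r c"
  shows "fip Y X = (\<Sum>j<c. col Y j \<bullet> col X j)"
  using assms unfolding fip_def scalar_prod_def
  by (simp add: lessThan_atLeast0) (rule sum.swap)

lemma fsq_cols:
  assumes "X \<in> carrier_mat r c"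
  shows "fsq X = (\<Sum>j<c. col X j \<bullet> col X j)"
  using fip_cols[OF assms assms] fsq_fip by simp

lemma fsq_eq0:
  assumes "X \<in> carrier_mat r c" "fsq X = 0"
  shows "X = 0\<^sub>m r c"
proof (rule eq_matI)
  fix i j assume ij: "i < dim_row (0\<^sub>m r c)" "j < dim_col (0\<^sub>m r c)"
  have "(\<Sum>j'<c. (X$$(i,j'))\<^sup>2) = 0"
    using assms ij sum_nonneg_eq_0_iff[of "{..<r}" "\<lambda>i. \<Sum>j<c. (X$$(i,j))\<^sup>2"]
    by (simp add: fsq_def sum_nonneg)
  then have "(X$$(i,j))\<^sup>2 = 0"
    using ij sum_nonneg_eq_0_iff[of "{..<c}" "\<lambda>j. (X$$(i,j))\<^sup>2"] by simp
  then show "X $$ (i, j) = 0\<^sub>m r c $$ (i, j)" using ij by simp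
qed (use assms in auto)

lemma fip_mult_left:
  assumes M: "M \<in> carrier_mat r r" and X: "X \<in> carrier_mat r c"
    and pd: "\<forall>x\<in>carrier_vec r. x \<bullet> (M *\<^sub>v x) \<ge> a * (x \<bullet> x)"
  shows "fip (M * X) X \<ge> a * fsq X"
proof -
  have "fip (M * X) X = (\<Sum>j<c. col (M * X) j \<bullet> col X j)"
    using M X by (intro fip_cols) auto
  also have "\<dots> = (\<Sum>j<c. col X j \<bullet> (M *\<^sub>v col X j))"
    using M X by (intro sum.cong refl) (simp add: comm_scalar_prod[of _ r] mult_mat_vec_def)
  also have "\<dots> \<ge> (\<Sum>j<c. a * (col X j \<bullet> col X j))"
    using pd X by (intro sum_mono) auto
  finally show ?thesis using fsq_cols[OF X] by (simp add: sum_distrib_left)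
qed

lemma fip_mult_right:
  assumes M: "M \<in> carrier_mat c c" and X: "X \<in> carrier_mat r c" and sym: "transpose_mat M = M"
    and pd: "\<forall>x\<in>carrier_vec c. x \<bullet> (M *\<^sub>v x) \<ge> a * (x \<bullet> x)"
  shows "fip (X * M) X \<ge> a * fsq X"
proof -
  have "fip (X * M) X = fip (transpose_mat (X * M)) (transpose_mat X)"
    using M X by (intro fip_transpose[symmetric]) auto
  also have "transpose_mat (X * M) = M * transpose_mat X"
    using M X sym by (simp add: transpose_mult)
  finally have "fip (X * M) X = fip (M * transpose_mat X) (transpose_mat X)" .
  moreover have "fip (M * transpose_mat X) (transpose_mat X) \<ge> a * fsq (transpose_mat X)"
    using M X pd by (intro fip_mult_left) auto
  ultimately show ?thesis by (simp add: fsq_transpose)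
qed

lemma fsq_mult_left:
  assumes M: "M \<in> carrier_mat r' r" and X: "X \<in> carrier_mat r c"
    and bd: "\<forall>y\<in>carrier_vec r. (M *\<^sub>v y) \<bullet> (M *\<^sub>v y) \<le> L * (y \<bullet> y)"
  shows "fsq (M * X) \<le> L * fsq X"
proof -
  have "fsq (M * X) = (\<Sum>j<c. col (M * X) j \<bullet> col (M * X) j)"
    using M X by (intro fsq_cols) auto
  also have "\<dots> = (\<Sum>j<c. (M *\<^sub>v col X j) \<bullet> (M *\<^sub>v col X j))"
    using M X by (intro sum.cong refl) (simp add: mult_mat_vec_def)
  also have "\<dots> \<le> (\<Sum>j<c. L * (col X j \<bullet> col X j))"
    using bd X by (intro sum_mono) auto
  finally show ?thesis using fsq_cols[OF X] by (simp add: sum_distrib_left)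
qed

lemma fsq_mult_right:
  assumes M: "M \<in> carrier_mat c c'" and X: "X \<in> carrier_mat r c"
    and bd: "\<forall>y\<in>carrier_vec c. (transpose_mat M *\<^sub>v y) \<bullet> (transpose_mat M *\<^sub>v y) \<le> L * (y \<bullet> y)"
  shows "fsq (X * M) \<le> L * fsq X"
proof -
  have "fsq (X * M) = fsq (transpose_mat M * transpose_mat X)"
    using M X by (simp add: transpose_mult[symmetric] fsq_transpose)
  also have "\<dots> \<le> L * fsq (transpose_mat X)"
    using M X bd by (intro fsq_mult_left[of _ c' c]) auto
  finally show ?thesis by (simp add: fsq_transpose)
qed

lemma frob_le:
  assumes "fsq X \<le> k\<^sup>2 * fsq Y" "k \<ge> 0"
  shows "frob_norm X \<le> k * frob_norm Y"
proof -
  have "sqrt (fsq X) \<le> sqrt (k\<^sup>2 * fsq Y)" using assms by (intro real_sqrt_le_mono)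
  then show ?thesis using assms by (simp add: frob_fsq real_sqrt_mult)
qed

lemma frob_triangle:
  assumes X: "X \<in> carrier_mat r c" and Y: "Y \<in> carrier_mat r c"
  shows "frob_norm (X + Y) \<le> frob_norm X + frob_norm Y"
proof -
  have "fsq (X + Y) = fsq X + 2 * fip X Y + fsq Y"
    using X Y by (simp add: fsq_def fip_def power2_eq_square sum.distrib algebra_simps sum_distrib_left)
  also have "fip X Y \<le> sqrt (fsq X) * sqrt (fsq Y)"
  proof -
    have "(fip X Y)\<^sup>2 \<le> fsq X * fsq Y" using fip_cs[OF X Y] .
    then have "\<bar>fip X Y\<bar> \<le> sqrt (fsq X * fsq Y)" using real_le_rsqrt by (metis real_sqrt_abs real_sqrt_le_mono)
    then show ?thesis by (simp add: real_sqrt_mult)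
  qed
  finally have "fsq (X + Y) \<le> (sqrt (fsq X) + sqrt (fsq Y))\<^sup>2"
    using fsq_ge0[of X] fsq_ge0[of Y] by (simp add: power2_eq_square algebra_simps)
  then have "sqrt (fsq (X + Y)) \<le> sqrt (fsq X) + sqrt (fsq Y)"
    using fsq_ge0 by (simp add: real_le_lsqrt real_sqrt_le_iff power2_eq_square real_sqrt_le_mono
       sqrt_le_D)
  then show ?thesis by (simp add: frob_fsq)
qed

definition dm :: "nat \<Rightarrow> (nat \<Rightarrow> real) \<Rightarrow> real mat" where
  "dm n f = mat n n (\<lambda>(i,j). if i = j then f i else 0)"

lemma dm_carrier[simp]: "dm n f \<in> carrier_mat n n" by (simp add: dm_def)

lemma dm_T: "transpose_mat (dm n f) = dm n f"
  by (rule eq_matI) (auto simp: dm_def)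

lemma dm_mult: "dm n f * dm n g = dm n (\<lambda>i. f i * g i)"
proof (rule eq_matI)
  fix i j assume ij: "i < dim_row (dm n (\<lambda>i. f i * g i))" "j < dim_col (dm n (\<lambda>i. f i * g i))"
  hence i: "i < n" and j: "j < n" by (auto simp: dm_def)
  have "(dm n f * dm n g) $$ (i,j) = (\<Sum>k\<in>{0..<n}. (if i = k then f i else 0) * (if k = j then g k else 0))"
    using i j by (simp add: dm_def scalar_prod_def row_def col_def)
  also have "\<dots> = (\<Sum>k\<in>{0..<n}. (if k = i then (if i = j then f i * g i else 0) else 0))"
    by (intro sum.cong refl) auto
  also have "\<dots> = (if i = j then f i * g i else 0)" using i by simp
  finally show "(dm n f * dm n g) $$ (i,j) = dm n (\<lambda>i. f i * g i) $$ (i,j)" using i j by (simp add: dm_def)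
qed (auto simp: dm_def)

lemma dm_one: "dm n (\<lambda>_. 1) = 1\<^sub>m n"
  by (rule eq_matI) (auto simp: dm_def)

lemma dm_ext: "(\<And>i. i < n \<Longrightarrow> f i = g i) \<Longrightarrow> dm n f = dm n g"
  by (rule eq_matI) (auto simp: dm_def)

lemma diag_dm: assumes "D \<in> carrier_mat n n" "diagonal_mat D"
  shows "D = dm n (\<lambda>i. D $$ (i,i))"
  by (rule eq_matI) (use assms in \<open>auto simp: dm_def diagonal_mat_def\<close>)

lemma dm_qf:
  assumes y: "y \<in> carrier_vec n" and f: "\<And>i. i < n \<Longrightarrow> f i \<ge> a"
  shows "y \<bullet> (dm n f *\<^sub>v y) \<ge> a * (y \<bullet> y)"
proof -
  have "dm n f *\<^sub>v y = vec n (\<lambda>i. f i * y $ i)"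
  proof (rule eq_vecI)
    fix i assume "i < dim_vec (vec n (\<lambda>i. f i * y $ i))"
    hence i: "i < n" by simp
    have "(dm n f *\<^sub>v y) $ i = (\<Sum>k\<in>{0..<n}. (if i = k then f i else 0) * y $ k)"
      using i y by (simp add: dm_def scalar_prod_def row_def)
    also have "\<dots> = (\<Sum>k\<in>{0..<n}. (if k = i then f i * y $ i else 0))"
      by (intro sum.cong refl) auto
    finally show "(dm n f *\<^sub>v y) $ i = vec n (\<lambda>i. f i * y $ i) $ i" using i by simp
  qed (simp add: dm_def)
  then have "y \<bullet> (dm n f *\<^sub>v y) = (\<Sum>i\<in>{0..<n}. f i * (y $ i * y $ i))"
    using y by (simp add: scalar_prod_def algebra_simps)
  also have "\<dots> \<ge> (\<Sum>i\<in>{0..<n}. a * (y $ i * y $ i))"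
    using f by (intro sum_mono mult_right_mono) auto
  finally show ?thesis using y by (simp add: scalar_prod_def sum_distrib_left)
qed

lemma qf_conj:
  fixes Q M :: "real mat"
  assumes Q: "Q \<in> carrier_mat n k" and M: "M \<in> carrier_mat n n" and x: "x \<in> carrier_vec k"
  shows "x \<bullet> ((transpose_mat Q * M * Q) *\<^sub>v x) = (Q *\<^sub>v x) \<bullet> (M *\<^sub>v (Q *\<^sub>v x))"
proof -
  have "(transpose_mat Q * M * Q) *\<^sub>v x = transpose_mat Q *\<^sub>v (M *\<^sub>v (Q *\<^sub>v x))"
  proof -
    have "(transpose_mat Q * M * Q) *\<^sub>v x = (transpose_mat Q * M) *\<^sub>v (Q *\<^sub>v x)"
      by (rule assoc_mult_mat_vec) (use Q M x in auto)
    also have "\<dots> = transpose_mat Q *\<^sub>v (M *\<^sub>v (Q *\<^sub>v x))"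
      by (rule assoc_mult_mat_vec) (use Q M x in auto)
    finally show ?thesis .
  qed
  moreover have "(transpose_mat Q *\<^sub>v (M *\<^sub>v (Q *\<^sub>v x))) \<bullet> x = (M *\<^sub>v (Q *\<^sub>v x)) \<bullet> (Q *\<^sub>v x)"
    by (rule transpose_vec_mult_scalar[of Q n k]) (use Q M x in auto)
  ultimately show ?thesis using Q M x
    by (metis comm_scalar_prod mult_mat_vec_carrier transpose_carrier_mat)
qed

lemma unit_qf: fixes D :: "real mat" assumes "D \<in> carrier_mat n n" "i < n"
  shows "unit_vec n i \<bullet> (D *\<^sub>v unit_vec n i) = D $$ (i,i)"
proof -
  have "D *\<^sub>v unit_vec n i = col D i"
  proof (rule eq_vecI)
    fix j assume "j < dim_vec (col D i)"
    then have j: "j < n" using assms by simp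
    have "(D *\<^sub>v unit_vec n i) $ j = row D j \<bullet> unit_vec n i" using assms j by simp
    also have "\<dots> = row D j $ i" using assms(2) by (rule scalar_prod_right_unit)
    finally show "(D *\<^sub>v unit_vec n i) $ j = col D i $ j" using assms j by simp
  qed (use assms in simp)
  then show ?thesis using assms by simp
qed

lemma assoc_sand:
  fixes Q E F :: "real mat"
  assumes "Q \<in> carrier_mat n n" "E \<in> carrier_mat n n" "F \<in> carrier_mat n n"
  shows "Q * E * transpose_mat Q * (Q * F * transpose_mat Q) = Q * (E * (transpose_mat Q * Q) * F) * transpose_mat Q"
  using assms by (simp add: assoc_mult_mat[of _ n n _ n _ n])

lemma sqrt_exists:
  fixes A :: "real mat"
  assumes A: "A \<in> carrier_mat n n" and sym: "transpose_mat A = A" and c: "c > 0"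
    and pd: "\<forall>x\<in>carrier_vec n. x \<bullet> (A *\<^sub>v x) \<ge> c\<^sup>2 * (x \<bullet> x)"
  shows "\<exists>S R. S \<in> carrier_mat n n \<and> R \<in> carrier_mat n n \<and> transpose_mat S = S \<and> S * S = A \<and>
     S * R = 1\<^sub>m n \<and> R * S = 1\<^sub>m n \<and> (\<forall>x\<in>carrier_vec n. x \<bullet> (S *\<^sub>v x) \<ge> c * (x \<bullet> x))"
proof -
  obtain Q D where Q: "Q \<in> carrier_mat n n" and D: "D \<in> carrier_mat n n"
    and QTQ: "transpose_mat Q * Q = 1\<^sub>m n" and QQT: "Q * transpose_mat Q = 1\<^sub>m n"
    and diag: "diagonal_mat D" and AQ: "A = Q * D * transpose_mat Q"
    using spectral[OF A sym] by blast
  have QT: "transpose_mat Q \<in> carrier_mat n n" using Q by simp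
  define d where "d i = D $$ (i,i)" for i
  have Ddm: "D = dm n d" unfolding d_def using diag_dm[OF D diag] .
  have DA: "D = transpose_mat Q * A * Q"
  proof -
    have "transpose_mat Q * A * Q = transpose_mat Q * Q * D * (transpose_mat Q * Q)"
      unfolding AQ by (rule assoc5[symmetric]) (use Q D QT in auto)
    then show ?thesis using QTQ D by simp
  qed
  have dge: "d i \<ge> c\<^sup>2" if i: "i < n" for i
  proof -
    let ?e = "unit_vec n i"
    have "d i = ?e \<bullet> (D *\<^sub>v ?e)" using unit_qf[OF D i] by (simp add: d_def)
    also have "\<dots> = (Q *\<^sub>v ?e) \<bullet> (A *\<^sub>v (Q *\<^sub>v ?e))" unfolding DA
      by (rule qf_conj[OF Q A]) simp
    also have "\<dots> \<ge> c\<^sup>2 * ((Q *\<^sub>v ?e) \<bullet> (Q *\<^sub>v ?e))" using pd Q by simp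
    finally have 1: "d i \<ge> c\<^sup>2 * ((Q *\<^sub>v ?e) \<bullet> (Q *\<^sub>v ?e))" .
    have "(Q *\<^sub>v ?e) \<bullet> (Q *\<^sub>v ?e) = (Q *\<^sub>v ?e) \<bullet> (1\<^sub>m n *\<^sub>v (Q *\<^sub>v ?e))" using Q by simp
    also have "\<dots> = ?e \<bullet> ((transpose_mat Q * 1\<^sub>m n * Q) *\<^sub>v ?e)"
      by (rule qf_conj[OF Q, symmetric]) auto
    also have "\<dots> = 1" using QTQ Q i by simp
    finally show ?thesis using 1 by simp
  qed
  have dpos: "d i > 0" if "i < n" for i using dge[OF that] c
    by (smt (verit) zero_less_power)
  define E where "E = dm n (\<lambda>i. sqrt (d i))"
  define Ei where "Ei = dm n (\<lambda>i. 1 / sqrt (d i))"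
  define S where "S = Q * E * transpose_mat Q"
  define R where "R = Q * Ei * transpose_mat Q"
  have E: "E \<in> carrier_mat n n" "Ei \<in> carrier_mat n n" by (auto simp: E_def Ei_def)
  have S: "S \<in> carrier_mat n n" and R: "R \<in> carrier_mat n n" using Q E by (auto simp: S_def R_def)
  have EE: "E * E = D" unfolding E_def Ddm dm_mult
    by (rule dm_ext) (use dpos in \<open>simp add: less_imp_le\<close>)
  have EEi: "E * Ei = 1\<^sub>m n" unfolding E_def Ei_def dm_mult dm_one[symmetric]
    by (rule dm_ext) (use dpos in \<open>simp add: less_imp_neq[symmetric]\<close>)
  have EiE: "Ei * E = 1\<^sub>m n" unfolding E_def Ei_def dm_mult dm_one[symmetric]
    by (rule dm_ext) (use dpos in \<open>simp add: less_imp_neq[symmetric]\<close>)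
  have ST: "transpose_mat S = S"
  proof -
    have "transpose_mat S = transpose_mat (transpose_mat Q) * transpose_mat (Q * E)"
      unfolding S_def by (rule transpose_mult) (use Q E in auto)
    also have "transpose_mat (Q * E) = transpose_mat E * transpose_mat Q"
      by (rule transpose_mult) (use Q E in auto)
    finally show ?thesis using Q E unfolding S_def
      by (simp add: E_def dm_T assoc_mult_mat[of _ n n _ n _ n])
  qed
  have SS: "S * S = A" unfolding S_def using assoc_sand[OF Q E(1) E(1)] QTQ EE AQ E by simp
  have SR: "S * R = 1\<^sub>m n" unfolding S_def R_def using assoc_sand[OF Q E(1) E(2)] QTQ EEi QQT E Q by simp
  have RS: "R * S = 1\<^sub>m n" unfolding S_def R_def using assoc_sand[OF Q E(2) E(1)] QTQ EiE QQT E Q by simp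
  have qf: "x \<bullet> (S *\<^sub>v x) \<ge> c * (x \<bullet> x)" if x: "x \<in> carrier_vec n" for x
  proof -
    let ?y = "transpose_mat Q *\<^sub>v x"
    have y: "?y \<in> carrier_vec n" using Q x by simp
    have "x \<bullet> (S *\<^sub>v x) = ?y \<bullet> (E *\<^sub>v ?y)"
      unfolding S_def using qf_conj[OF QT E(1) x] Q by simp
    also have "\<dots> \<ge> c * (?y \<bullet> ?y)" unfolding E_def
    proof (rule dm_qf[OF y])
      fix i assume "i < n"
      then have "sqrt (c\<^sup>2) \<le> sqrt (d i)" using dge by (intro real_sqrt_le_mono) auto
      then show "c \<le> sqrt (d i)" using c by simp
    qed
    also have "?y \<bullet> ?y = ?y \<bullet> (1\<^sub>m n *\<^sub>v ?y)" using y by simp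
    also have "\<dots> = x \<bullet> ((transpose_mat (transpose_mat Q) * 1\<^sub>m n * transpose_mat Q) *\<^sub>v x)"
      by (rule qf_conj[OF QT, symmetric]) (use x in auto)
    also have "\<dots> = x \<bullet> x" using QQT Q x by simp
    finally show ?thesis .
  qed
  show ?thesis using S R ST SS SR RS qf by blast
qed

lemma sqrt_unique:
  fixes S B :: "real mat"
  assumes S: "S \<in> carrier_mat n n" and B: "B \<in> carrier_mat n n" and c: "c > 0"
    and Sq: "\<forall>x\<in>carrier_vec n. x \<bullet> (S *\<^sub>v x) \<ge> c * (x \<bullet> x)"
    and BT: "transpose_mat B = B" and Bq: "\<forall>x\<in>carrier_vec n. x \<bullet> (B *\<^sub>v x) \<ge> 0"
    and eq: "S * S = B * B"
  shows "B = S"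
proof -
  define X where "X = S - B"
  have X: "X \<in> carrier_mat n n" using minus_carrier_mat[OF B] by (simp add: X_def)
  have 1: "S * X = S * S - S * B" unfolding X_def by (rule mult_minus_distrib_mat) (use S B in auto)
  have 2: "X * B = S * B - B * B" unfolding X_def by (rule minus_mult_distrib_mat) (use S B in auto)
  have Y: "S * X + X * B = 0\<^sub>m n n"
    unfolding 1 2 eq by (rule eq_matI) (use S B in auto)
  have "fip (S * X + X * B) X = fip (S * X) X + fip (X * B) X"
    by (rule fip_add) (use S B X in auto)
  moreover have "fip (S * X) X \<ge> c * fsq X" by (rule fip_mult_left[OF S X Sq])
  moreover have "fip (X * B) X \<ge> 0 * fsq X" by (rule fip_mult_right[OF B X BT]) (use Bq in auto)
  moreover have "fip (S * X + X * B) X = 0" unfolding Y using X by (simp add: fip_def)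
  ultimately have "c * fsq X \<le> 0" by simp
  then have "fsq X = 0" using c fsq_ge0[of X] by (simp add: mult_le_0_iff)
  then have "X = 0\<^sub>m n n" using fsq_eq0[OF X] by simp
  show ?thesis
  proof (rule eq_matI)
    fix i j assume ij: "i < dim_row S" "j < dim_col S"
    have "X $$ (i,j) = 0" using \<open>X = 0\<^sub>m n n\<close> ij S by simp
    then show "B $$ (i,j) = S $$ (i,j)" using ij S B by (simp add: X_def)
  qed (use S B in auto)
qed

lemma sqrt_props:
  fixes A :: "real mat"
  assumes A: "A \<in> carrier_mat n n" and sym: "transpose_mat A = A" and c: "c > 0"
    and pd: "\<forall>x\<in>carrier_vec n. x \<bullet> (A *\<^sub>v x) \<ge> c\<^sup>2 * (x \<bullet> x)"
  shows "mat_sqrt A \<in> carrier_mat n n \<and> transpose_mat (mat_sqrt A) = mat_sqrt A \<and>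
     mat_sqrt A * mat_sqrt A = A \<and>
     (\<forall>x\<in>carrier_vec n. x \<bullet> (mat_sqrt A *\<^sub>v x) \<ge> c * (x \<bullet> x)) \<and>
     inv_sqrt_mat A \<in> carrier_mat n n \<and> mat_sqrt A * inv_sqrt_mat A = 1\<^sub>m n \<and>
     inv_sqrt_mat A * mat_sqrt A = 1\<^sub>m n"
proof -
  obtain S R where S: "S \<in> carrier_mat n n" and R: "R \<in> carrier_mat n n" and ST: "transpose_mat S = S"
    and SS: "S * S = A" and SR: "S * R = 1\<^sub>m n" and RS: "R * S = 1\<^sub>m n"
    and Sq: "\<forall>x\<in>carrier_vec n. x \<bullet> (S *\<^sub>v x) \<ge> c * (x \<bullet> x)"
    using sqrt_exists[OF A sym c pd] by blast
  have dA: "dim_row A = n" using A by simp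
  have psdS: "psd_mat S" unfolding psd_mat_def
  proof (intro conjI ballI)
    fix v :: "real vec" assume "v \<in> carrier_vec (dim_row S)"
    then have v: "v \<in> carrier_vec n" using S by simp
    have "c * (v \<bullet> v) \<ge> 0" using c sprod_self_ge0[of v] by simp
    then show "0 \<le> v \<bullet> (S *\<^sub>v v)" using Sq v by force
  qed (use S ST in auto)
  have msq: "mat_sqrt A = S" unfolding mat_sqrt_def dA
  proof (rule the_equality)
    show "S \<in> carrier_mat n n \<and> psd_mat S \<and> S * S = A" using S psdS SS by simp
  next
    fix B assume B: "B \<in> carrier_mat n n \<and> psd_mat B \<and> B * B = A"
    then have Bc: "B \<in> carrier_mat n n" and BT: "transpose_mat B = B"
      and Bq: "\<forall>x\<in>carrier_vec n. x \<bullet> (B *\<^sub>v x) \<ge> 0" unfolding psd_mat_def by auto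
    show "B = S" by (rule sqrt_unique[OF S Bc c Sq BT Bq]) (use B SS in simp)
  qed
  have minv: "mat_inv S = R" unfolding mat_inv_def
  proof (rule the_equality)
    show "R \<in> carrier_mat (dim_row S) (dim_row S) \<and> S * R = 1\<^sub>m (dim_row S) \<and> R * S = 1\<^sub>m (dim_row S)"
      using R S SR RS by simp
  next
    fix R' assume R': "R' \<in> carrier_mat (dim_row S) (dim_row S) \<and> S * R' = 1\<^sub>m (dim_row S) \<and> R' * S = 1\<^sub>m (dim_row S)"
    then have R'c: "R' \<in> carrier_mat n n" and R'S: "R' * S = 1\<^sub>m n" using S by auto
    have "R' = R' * (S * R)" using SR R'c by simp
    also have "\<dots> = (R' * S) * R" using R'c S R by (simp add: assoc_mult_mat[of _ n n _ n _ n])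
    also have "\<dots> = R" using R'S R by simp
    finally show "R' = R" .
  qed
  show ?thesis unfolding inv_sqrt_mat_def msq minv using S R ST SS SR RS Sq by blast
qed

lemma smult_mat_vec: fixes A :: "real mat"
  assumes "A \<in> carrier_mat r c" "v \<in> carrier_vec c"
  shows "(k \<cdot>\<^sub>m A) *\<^sub>v v = k \<cdot>\<^sub>v (A *\<^sub>v v)"
  by (rule eq_vecI) (use assms in \<open>auto simp: scalar_prod_def sum_distrib_left algebra_simps\<close>)

lemma loewner_qf:
  fixes P :: "real mat"
  assumes P: "P \<in> carrier_mat K K" and L: "loewner_le (a \<cdot>\<^sub>m 1\<^sub>m K) (b \<cdot>\<^sub>m P)" and x: "x \<in> carrier_vec K"
  shows "a * (x \<bullet> x) \<le> b * (x \<bullet> (P *\<^sub>v x))"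
proof -
  have psd: "psd_mat (b \<cdot>\<^sub>m P - a \<cdot>\<^sub>m 1\<^sub>m K)" using L by (simp add: loewner_le_def)
  have "0 \<le> x \<bullet> ((b \<cdot>\<^sub>m P - a \<cdot>\<^sub>m 1\<^sub>m K) *\<^sub>v x)" using psd x P unfolding psd_mat_def by auto
  also have "(b \<cdot>\<^sub>m P - a \<cdot>\<^sub>m 1\<^sub>m K) *\<^sub>v x = b \<cdot>\<^sub>v (P *\<^sub>v x) - a \<cdot>\<^sub>v x"
    using P x by (simp add: minus_mult_distrib_mat_vec[of _ K K] smult_mat_vec[of _ K K])
  also have "x \<bullet> (b \<cdot>\<^sub>v (P *\<^sub>v x) - a \<cdot>\<^sub>v x) = b * (x \<bullet> (P *\<^sub>v x)) - a * (x \<bullet> x)"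
    using P x by (simp add: scalar_prod_minus_distrib[of _ K])
  finally show ?thesis by simp
qed

lemma loewner_qf2:
  fixes P :: "real mat"
  assumes P: "P \<in> carrier_mat K K" and L: "loewner_le (b \<cdot>\<^sub>m P) (a \<cdot>\<^sub>m 1\<^sub>m K)" and x: "x \<in> carrier_vec K"
  shows "b * (x \<bullet> (P *\<^sub>v x)) \<le> a * (x \<bullet> x)"
proof -
  have psd: "psd_mat (a \<cdot>\<^sub>m 1\<^sub>m K - b \<cdot>\<^sub>m P)" using L by (simp add: loewner_le_def)
  have "0 \<le> x \<bullet> ((a \<cdot>\<^sub>m 1\<^sub>m K - b \<cdot>\<^sub>m P) *\<^sub>v x)" using psd x P unfolding psd_mat_def by auto
  also have "(a \<cdot>\<^sub>m 1\<^sub>m K - b \<cdot>\<^sub>m P) *\<^sub>v x = a \<cdot>\<^sub>v x - b \<cdot>\<^sub>v (P *\<^sub>v x)"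
    using P x by (simp add: minus_mult_distrib_mat_vec[of _ K K] smult_mat_vec[of _ K K])
  also have "x \<bullet> (a \<cdot>\<^sub>v x - b \<cdot>\<^sub>v (P *\<^sub>v x)) = a * (x \<bullet> x) - b * (x \<bullet> (P *\<^sub>v x))"
    using P x by (simp add: scalar_prod_minus_distrib[of _ K])
  finally show ?thesis by simp
qed

lemma gram_qf:
  fixes G :: "real mat"
  assumes G: "G \<in> carrier_mat n K" and x: "x \<in> carrier_vec K"
  shows "x \<bullet> ((transpose_mat G * G) *\<^sub>v x) = (G *\<^sub>v x) \<bullet> (G *\<^sub>v x)"
  using qf_conj[OF G one_carrier_mat x] G x by simp

lemma cs_vec: fixes u v :: "real vec"
  assumes "u \<in> carrier_vec n" "v \<in> carrier_vec n"
  shows "(u \<bullet> v)\<^sup>2 \<le> (u \<bullet> u) * (v \<bullet> v)"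
  using cs_sum[of "\<lambda>i. u $ i" "\<lambda>i. v $ i" "{0..<n}"] assms
  by (simp add: scalar_prod_def power2_eq_square)

lemma transpose_bound:
  fixes G :: "real mat"
  assumes G: "G \<in> carrier_mat n K" and L: "L \<ge> 0"
    and bd: "\<forall>x\<in>carrier_vec K. (G *\<^sub>v x) \<bullet> (G *\<^sub>v x) \<le> L * (x \<bullet> x)"
    and y: "y \<in> carrier_vec n"
  shows "(transpose_mat G *\<^sub>v y) \<bullet> (transpose_mat G *\<^sub>v y) \<le> L * (y \<bullet> y)"
proof -
  define z where "z = transpose_mat G *\<^sub>v y"
  have z: "z \<in> carrier_vec K" using G y by (simp add: z_def)
  have "z \<bullet> z = y \<bullet> (G *\<^sub>v z)" unfolding z_def by (rule transpose_vec_mult_scalar) (use G y z_def z in auto)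
  then have "(z \<bullet> z)\<^sup>2 \<le> (y \<bullet> y) * ((G *\<^sub>v z) \<bullet> (G *\<^sub>v z))"
    using cs_vec[OF y, of "G *\<^sub>v z"] G z by simp
  also have "\<dots> \<le> (y \<bullet> y) * (L * (z \<bullet> z))"
    using bd z sprod_self_ge0[of y] by (intro mult_left_mono) auto
  finally have 1: "(z \<bullet> z) * (z \<bullet> z) \<le> (L * (y \<bullet> y)) * (z \<bullet> z)" by (simp add: power2_eq_square algebra_simps)
  show ?thesis
  proof (cases "z \<bullet> z = 0")
    case True then show ?thesis using L sprod_self_ge0[of y] by (simp add: z_def)
  next
    case False
    then have "z \<bullet> z > 0" using sprod_self_ge0[of z] by linarith
    then show ?thesis using 1 unfolding z_def by simp
  qed
qed

lemma fsq_swap: fixes X Y :: "real mat"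
  assumes "X \<in> carrier_mat r c" "Y \<in> carrier_mat r c"
  shows "fsq (X - Y) = fsq (Y - X)"
  using assms by (simp add: fsq_def power2_commute)

lemma inv_bound:
  fixes S R A :: "real mat"
  assumes S: "S \<in> carrier_mat k k" and R: "R \<in> carrier_mat k k" and ST: "transpose_mat S = S"
    and SS: "S * S = A" and SR: "S * R = 1\<^sub>m k" and c: "c > 0"
    and pd: "\<forall>x\<in>carrier_vec k. x \<bullet> (A *\<^sub>v x) \<ge> c\<^sup>2 * (x \<bullet> x)"
  shows "\<forall>y\<in>carrier_vec k. (R *\<^sub>v y) \<bullet> (R *\<^sub>v y) \<le> (1 / c\<^sup>2) * (y \<bullet> y)"
proof
  fix y :: "real vec" assume y: "y \<in> carrier_vec k"
  define x where "x = R *\<^sub>v y"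
  have x: "x \<in> carrier_vec k" using R y by (simp add: x_def)
  have Sx: "S *\<^sub>v x = y" unfolding x_def using assoc_mult_mat_vec[OF S R y, symmetric] SR y by simp
  have "x \<bullet> ((transpose_mat S * S) *\<^sub>v x) = (S *\<^sub>v x) \<bullet> (S *\<^sub>v x)" by (rule gram_qf[OF S x])
  then have "y \<bullet> y = x \<bullet> (A *\<^sub>v x)" using ST SS Sx by simp
  also have "\<dots> \<ge> c\<^sup>2 * (x \<bullet> x)" using pd x by simp
  finally have "c\<^sup>2 * (x \<bullet> x) \<le> y \<bullet> y" .
  then show "(R *\<^sub>v y) \<bullet> (R *\<^sub>v y) \<le> (1 / c\<^sup>2) * (y \<bullet> y)" using c unfolding x_def[symmetric]
    by (simp add: field_simps)
qed

lemma inv_sym: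
  fixes S R :: "real mat"
  assumes S: "S \<in> carrier_mat k k" and R: "R \<in> carrier_mat k k" and ST: "transpose_mat S = S"
    and SR: "S * R = 1\<^sub>m k"
  shows "transpose_mat R = R"
proof -
  have RS': "transpose_mat R * S = 1\<^sub>m k"
  proof -
    have "transpose_mat (S * R) = transpose_mat R * transpose_mat S" by (rule transpose_mult) (use S R in auto)
    then show ?thesis using SR ST by simp
  qed
  have "transpose_mat R = transpose_mat R * (S * R)" using SR R by simp
  also have "\<dots> = (transpose_mat R * S) * R" using R S by (simp add: assoc_mult_mat[of _ k k _ k _ k])
  also have "\<dots> = R" using RS' R by simp
  finally show ?thesis .
qed

lemma sylvester_bound:
  fixes S T X :: "real mat"
  assumes S: "S \<in> carrier_mat k k" and T: "T \<in> carrier_mat k k" and X: "X \<in> carrier_mat k k"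
    and TT: "transpose_mat T = T" and c: "c > 0"
    and Sq: "\<forall>x\<in>carrier_vec k. x \<bullet> (S *\<^sub>v x) \<ge> c * (x \<bullet> x)"
    and Tq: "\<forall>x\<in>carrier_vec k. x \<bullet> (T *\<^sub>v x) \<ge> c * (x \<bullet> x)"
  shows "fsq X \<le> (1 / (2 * c))\<^sup>2 * fsq (S * X + X * T)"
proof -
  let ?Y = "S * X + X * T"
  have Y: "?Y \<in> carrier_mat k k" using S T X by simp
  have "fip ?Y X = fip (S * X) X + fip (X * T) X" by (rule fip_add) (use S T X in auto)
  moreover have "fip (S * X) X \<ge> c * fsq X" by (rule fip_mult_left[OF S X Sq])
  moreover have "fip (X * T) X \<ge> c * fsq X" by (rule fip_mult_right[OF T X TT Tq])
  ultimately have 1: "2 * c * fsq X \<le> fip ?Y X" by simp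
  have 2: "(fip ?Y X)\<^sup>2 \<le> fsq ?Y * fsq X" by (rule fip_cs[OF Y X])
  show ?thesis
  proof (cases "fsq X = 0")
    case True then show ?thesis using fsq_ge0[of ?Y] by simp
  next
    case False
    then have fp: "fsq X > 0" using fsq_ge0[of X] by linarith
    have "(2 * c * fsq X)\<^sup>2 \<le> (fip ?Y X)\<^sup>2" using 1 c fp by (intro power_mono) auto
    then have "(2 * c)\<^sup>2 * fsq X * fsq X \<le> fsq ?Y * fsq X" using 2 by (simp add: power2_eq_square algebra_simps)
    then have "(2 * c)\<^sup>2 * fsq X \<le> fsq ?Y" using fp by simp
    then show ?thesis using c by (simp add: field_simps power2_eq_square)
  qed
qed

lemma main_bound:
  fixes G Gt :: "real mat" and m M :: real
  assumes K: "K \<ge> 1" and m: "0 < m" and mM: "m \<le> M"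
    and G: "G \<in> carrier_mat n K" and Gt: "Gt \<in> carrier_mat n K"
    and L1: "loewner_le (m \<cdot>\<^sub>m 1\<^sub>m K) ((1 / real n) \<cdot>\<^sub>m (transpose_mat G * G))"
    and L2: "loewner_le ((1 / real n) \<cdot>\<^sub>m (transpose_mat G * G)) (M \<cdot>\<^sub>m 1\<^sub>m K)"
    and L3: "loewner_le (m \<cdot>\<^sub>m 1\<^sub>m K) ((1 / real n) \<cdot>\<^sub>m (transpose_mat Gt * Gt))"
    and L4: "loewner_le ((1 / real n) \<cdot>\<^sub>m (transpose_mat Gt * Gt)) (M \<cdot>\<^sub>m 1\<^sub>m K)"
  shows "frob_norm (inv_sqrt_mat (transpose_mat G * G) - inv_sqrt_mat (transpose_mat Gt * Gt))
         \<le> (sqrt (M / m) / m) / real n * frob_norm (G - Gt) \<and>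
       frob_norm (G * inv_sqrt_mat (transpose_mat G * G) - Gt * inv_sqrt_mat (transpose_mat Gt * Gt))
         \<le> (1 / sqrt m + sqrt M * (sqrt (M / m) / m)) / sqrt (real n) * frob_norm (G - Gt)"
proof -
  define A where "A = transpose_mat G * G"
  define B where "B = transpose_mat Gt * Gt"
  have A: "A \<in> carrier_mat K K" and B: "B \<in> carrier_mat K K" using G Gt by (auto simp: A_def B_def)
  have AT: "transpose_mat A = A" unfolding A_def using G by (simp add: transpose_mult[of _ K n])
  have BT: "transpose_mat B = B" unfolding B_def using Gt by (simp add: transpose_mult[of _ K n])
  have n: "n > 0"
  proof (rule ccontr)
    assume "\<not> n > 0"
    then have "n = 0" by simp
    have e: "unit_vec K 0 \<in> carrier_vec K" by simp
    have "m * (unit_vec K 0 \<bullet> unit_vec K 0) \<le> (1 / real n) * (unit_vec K 0 \<bullet> (A *\<^sub>v unit_vec K 0))"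
      using loewner_qf[OF A _ e] L1 unfolding A_def by blast
    then show False using \<open>n = 0\<close> K m by simp
  qed
  define c where "c = sqrt (real n * m)"
  define C where "C = sqrt (real n * M)"
  have c: "c > 0" using n m by (simp add: c_def)
  have c2: "c\<^sup>2 = real n * m" using n m by (simp add: c_def)
  have C: "C \<ge> 0" using n m mM by (simp add: C_def)
  have C2: "C\<^sup>2 = real n * M" using n m mM by (simp add: C_def)
  have pdA: "\<forall>x\<in>carrier_vec K. x \<bullet> (A *\<^sub>v x) \<ge> c\<^sup>2 * (x \<bullet> x)"
  proof
    fix x :: "real vec" assume x: "x \<in> carrier_vec K"
    have "m * (x \<bullet> x) \<le> (1 / real n) * (x \<bullet> (A *\<^sub>v x))"
      using loewner_qf[OF A _ x] L1 unfolding A_def by blast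
    then show "x \<bullet> (A *\<^sub>v x) \<ge> c\<^sup>2 * (x \<bullet> x)" using n unfolding c2 by (simp add: field_simps)
  qed
  have pdB: "\<forall>x\<in>carrier_vec K. x \<bullet> (B *\<^sub>v x) \<ge> c\<^sup>2 * (x \<bullet> x)"
  proof
    fix x :: "real vec" assume x: "x \<in> carrier_vec K"
    have "m * (x \<bullet> x) \<le> (1 / real n) * (x \<bullet> (B *\<^sub>v x))"
      using loewner_qf[OF B _ x] L3 unfolding B_def by blast
    then show "x \<bullet> (B *\<^sub>v x) \<ge> c\<^sup>2 * (x \<bullet> x)" using n unfolding c2 by (simp add: field_simps)
  qed
  have ubG: "\<forall>x\<in>carrier_vec K. (G *\<^sub>v x) \<bullet> (G *\<^sub>v x) \<le> C\<^sup>2 * (x \<bullet> x)"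
  proof
    fix x :: "real vec" assume x: "x \<in> carrier_vec K"
    have "(1 / real n) * (x \<bullet> (A *\<^sub>v x)) \<le> M * (x \<bullet> x)"
      using loewner_qf2[OF A _ x] L2 unfolding A_def by blast
    then show "(G *\<^sub>v x) \<bullet> (G *\<^sub>v x) \<le> C\<^sup>2 * (x \<bullet> x)" using n gram_qf[OF G x]
      unfolding C2 A_def by (simp add: field_simps)
  qed
  have ubGt: "\<forall>x\<in>carrier_vec K. (Gt *\<^sub>v x) \<bullet> (Gt *\<^sub>v x) \<le> C\<^sup>2 * (x \<bullet> x)"
  proof
    fix x :: "real vec" assume x: "x \<in> carrier_vec K"
    have "(1 / real n) * (x \<bullet> (B *\<^sub>v x)) \<le> M * (x \<bullet> x)"
      using loewner_qf2[OF B _ x] L4 unfolding B_def by blast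
    then show "(Gt *\<^sub>v x) \<bullet> (Gt *\<^sub>v x) \<le> C\<^sup>2 * (x \<bullet> x)" using n gram_qf[OF Gt x]
      unfolding C2 B_def by (simp add: field_simps)
  qed
  have ubGT: "\<forall>y\<in>carrier_vec n. (transpose_mat G *\<^sub>v y) \<bullet> (transpose_mat G *\<^sub>v y) \<le> C\<^sup>2 * (y \<bullet> y)"
    using transpose_bound[OF G _ ubG] by simp
  have ubGtT: "\<forall>y\<in>carrier_vec n. (transpose_mat Gt *\<^sub>v y) \<bullet> (transpose_mat Gt *\<^sub>v y) \<le> C\<^sup>2 * (y \<bullet> y)"
    using transpose_bound[OF Gt _ ubGt] by simp
  define S where "S = mat_sqrt A"
  define R where "R = inv_sqrt_mat A"
  define T where "T = mat_sqrt B"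
  define Rt where "Rt = inv_sqrt_mat B"
  have S: "S \<in> carrier_mat K K" and ST: "transpose_mat S = S" and SS: "S * S = A"
    and Sq: "\<forall>x\<in>carrier_vec K. x \<bullet> (S *\<^sub>v x) \<ge> c * (x \<bullet> x)"
    and R: "R \<in> carrier_mat K K" and SR: "S * R = 1\<^sub>m K" and RS: "R * S = 1\<^sub>m K"
    using sqrt_props[OF A AT c pdA] unfolding S_def R_def by auto
  have T: "T \<in> carrier_mat K K" and TT: "transpose_mat T = T" and TTe: "T * T = B"
    and Tq: "\<forall>x\<in>carrier_vec K. x \<bullet> (T *\<^sub>v x) \<ge> c * (x \<bullet> x)"
    and Rt: "Rt \<in> carrier_mat K K" and TRt: "T * Rt = 1\<^sub>m K" and RtT: "Rt * T = 1\<^sub>m K"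
    using sqrt_props[OF B BT c pdB] unfolding T_def Rt_def by auto
  have RT: "transpose_mat R = R" by (rule inv_sym[OF S R ST SR])
  have RtT': "transpose_mat Rt = Rt" by (rule inv_sym[OF T Rt TT TRt])
  have Rb: "\<forall>y\<in>carrier_vec K. (R *\<^sub>v y) \<bullet> (R *\<^sub>v y) \<le> (1 / c\<^sup>2) * (y \<bullet> y)"
    by (rule inv_bound[OF S R ST SS SR c pdA])
  have Rtb: "\<forall>y\<in>carrier_vec K. (Rt *\<^sub>v y) \<bullet> (Rt *\<^sub>v y) \<le> (1 / c\<^sup>2) * (y \<bullet> y)"
    by (rule inv_bound[OF T Rt TT TTe TRt c pdB])
  define D where "D = G - Gt"
  have Dc: "D \<in> carrier_mat n K" using minus_carrier_mat[OF Gt] by (simp add: D_def)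
  have AB: "A - B = transpose_mat G * D + transpose_mat D * Gt"
    unfolding A_def B_def D_def
  proof -
    have 1: "transpose_mat G * (G - Gt) = transpose_mat G * G - transpose_mat G * Gt"
      by (rule mult_minus_distrib_mat) (use G Gt in auto)
    have 2: "transpose_mat (G - Gt) = transpose_mat G - transpose_mat Gt"
      by (rule eq_matI) (use G Gt in auto)
    have 3: "(transpose_mat G - transpose_mat Gt) * Gt = transpose_mat G * Gt - transpose_mat Gt * Gt"
      by (rule minus_mult_distrib_mat) (use G Gt in auto)
    show "transpose_mat G * G - transpose_mat Gt * Gt =
      transpose_mat G * (G - Gt) + transpose_mat (G - Gt) * Gt"
      unfolding 1 2 3 by (rule eq_matI) (use G Gt in auto)
  qed
  have fAB: "frob_norm (A - B) \<le> 2 * C * frob_norm D"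
  proof -
    have "frob_norm (A - B) \<le> frob_norm (transpose_mat G * D) + frob_norm (transpose_mat D * Gt)"
      unfolding AB by (rule frob_triangle) (use G Gt Dc in auto)
    moreover have "frob_norm (transpose_mat G * D) \<le> C * frob_norm D"
      by (rule frob_le[OF _ C]) (rule fsq_mult_left[OF _ Dc ubGT], use G in auto)
    moreover have "frob_norm (transpose_mat D * Gt) \<le> C * frob_norm D"
    proof -
      have "fsq (transpose_mat D * Gt) \<le> C\<^sup>2 * fsq (transpose_mat D)"
        by (rule fsq_mult_right[OF Gt _ ubGtT]) (use Dc in auto)
      then show ?thesis by (intro frob_le[OF _ C]) (simp add: fsq_transpose)
    qed
    ultimately show ?thesis by simp
  qed
  define X where "X = S - T"
  have X: "X \<in> carrier_mat K K" using minus_carrier_mat[OF T] by (simp add: X_def)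
  have Syl: "S * X + X * T = A - B"
  proof -
    have 1: "S * X = S * S - S * T" unfolding X_def by (rule mult_minus_distrib_mat) (use S T in auto)
    have 2: "X * T = S * T - T * T" unfolding X_def by (rule minus_mult_distrib_mat) (use S T in auto)
    show ?thesis unfolding 1 2 SS TTe by (rule eq_matI) (use S T A B in auto)
  qed
  have fX: "frob_norm X \<le> (C / c) * frob_norm D"
  proof -
    have "frob_norm X \<le> (1 / (2 * c)) * frob_norm (S * X + X * T)"
      by (rule frob_le[OF sylvester_bound[OF S T X TT c Sq Tq]]) (use c in simp)
    also have "\<dots> \<le> (1 / (2 * c)) * (2 * C * frob_norm D)" unfolding Syl using fAB c by (intro mult_left_mono) auto
    finally show ?thesis using c by simp
  qed
  have RR: "R - Rt = R * (T - S) * Rt"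
  proof -
    have "R * (T - S) = R * T - R * S" by (rule mult_minus_distrib_mat) (use R T S in auto)
    then have "R * (T - S) * Rt = (R * T - R * S) * Rt" by simp
    also have "\<dots> = R * T * Rt - R * S * Rt" by (rule minus_mult_distrib_mat) (use R T S Rt in auto)
    also have "R * T * Rt = R" using R T Rt TRt by (simp add: assoc_mult_mat[of _ K K _ K _ K])
    also have "R * S * Rt = Rt" using R S Rt RS by simp
    finally show ?thesis by simp
  qed
  have fR: "frob_norm (R - Rt) \<le> (C / (c * c * c)) * frob_norm D"
  proof -
    have a: "fsq (R * (T - S) * Rt) \<le> (1 / c\<^sup>2) * fsq (R * (T - S))"
      by (rule fsq_mult_right[of _ K K]) (use R T S Rt RtT' Rtb in auto)
    have b: "fsq (R * (T - S)) \<le> (1 / c\<^sup>2) * fsq (T - S)"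
      by (rule fsq_mult_left[of _ K K]) (use R T S Rb in auto)
    have e: "fsq (T - S) = fsq X" unfolding X_def using fsq_swap[OF T S] .
    have "(1 / c\<^sup>2) * fsq (R * (T - S)) \<le> (1 / c\<^sup>2) * ((1 / c\<^sup>2) * fsq X)"
      using b e c by (intro mult_left_mono) auto
    then have "fsq (R - Rt) \<le> (1 / c\<^sup>2) * ((1 / c\<^sup>2) * fsq X)" unfolding RR using a by linarith
    then have "frob_norm (R - Rt) \<le> (1 / c\<^sup>2) * frob_norm X"
      by (intro frob_le) (simp_all add: power2_eq_square)
    also have "\<dots> \<le> (1 / c\<^sup>2) * ((C / c) * frob_norm D)" using fX c by (intro mult_left_mono) auto
    finally show ?thesis by (simp add: power2_eq_square)
  qed
  have GR: "G * R - Gt * Rt = D * R + Gt * (R - Rt)"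
  proof -
    have 1: "D * R = G * R - Gt * R" unfolding D_def by (rule minus_mult_distrib_mat) (use G Gt R in auto)
    have 2: "Gt * (R - Rt) = Gt * R - Gt * Rt" by (rule mult_minus_distrib_mat) (use Gt R Rt in auto)
    show ?thesis unfolding 1 2 by (rule eq_matI) (use G Gt R Rt in auto)
  qed
  have fGR: "frob_norm (G * R - Gt * Rt) \<le> (1 / c + C * (C / (c * c * c))) * frob_norm D"
  proof -
    have "frob_norm (G * R - Gt * Rt) \<le> frob_norm (D * R) + frob_norm (Gt * (R - Rt))"
      unfolding GR by (rule frob_triangle) (use Dc R Gt Rt in auto)
    moreover have "frob_norm (D * R) \<le> (1 / c) * frob_norm D"
    proof (rule frob_le)
      show "fsq (D * R) \<le> (1 / c)\<^sup>2 * fsq D"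
        by (rule fsq_mult_right[OF R Dc]) (use Rb RT in \<open>simp add: power_divide\<close>)
    qed (use c in simp)
    moreover have "frob_norm (Gt * (R - Rt)) \<le> C * frob_norm (R - Rt)"
      by (rule frob_le[OF _ C]) (rule fsq_mult_left[OF Gt _ ubGt], use R Rt in auto)
    moreover have "C * frob_norm (R - Rt) \<le> C * ((C / (c * c * c)) * frob_norm D)"
      using fR C by (intro mult_left_mono) auto
    ultimately show ?thesis by (simp add: algebra_simps)
  qed
  have k1: "C / (c * c * c) = (sqrt (M / m) / m) / real n"
  proof -
    have "C / c = sqrt (M / m)" using n m unfolding C_def c_def
      by (simp add: real_sqrt_divide[symmetric])
    moreover have "c * c = real n * m" using c2 by (simp add: power2_eq_square)
    ultimately show ?thesis using n m c by (simp add: field_simps)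
  qed
  have k2: "1 / c + C * (C / (c * c * c)) = (1 / sqrt m + sqrt M * (sqrt (M / m) / m)) / sqrt (real n)"
  proof -
    have "1 / c = (1 / sqrt m) / sqrt (real n)" unfolding c_def by (simp add: real_sqrt_mult)
    moreover have "C * (C / (c * c * c)) = sqrt M * (sqrt (M / m) / m) / sqrt (real n)"
    proof -
      have s: "sqrt (real n) > 0" using n by simp
      have Cs: "C = sqrt (real n) * sqrt M" unfolding C_def by (simp add: real_sqrt_mult)
      have cs: "c = sqrt (real n) * sqrt m" unfolding c_def by (simp add: real_sqrt_mult)
      have sm: "sqrt m > 0" using m by simp
      have "C * (C / (c * c * c)) = (sqrt M * sqrt M) / (sqrt m * sqrt m * sqrt m) / sqrt (real n)"
        unfolding Cs cs using s sm by (simp add: field_simps)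
      also have "\<dots> = sqrt M * (sqrt (M / m) / m) / sqrt (real n)"
        using m mM sm by (simp add: real_sqrt_divide field_simps)
      finally show ?thesis .
    qed
    ultimately show ?thesis by (simp add: add_divide_distrib)
  qed
  have f1: "frob_norm (R - Rt) \<le> (sqrt (M / m) / m) / real n * frob_norm D" using fR unfolding k1 .
  have f2: "frob_norm (G * R - Gt * Rt) \<le> (1 / sqrt m + sqrt M * (sqrt (M / m) / m)) / sqrt (real n) * frob_norm D"
    using fGR unfolding k2 .
  show ?thesis using f1 f2 unfolding R_def Rt_def A_def B_def D_def by blast
qed

theorem lemmaS5p4:
  fixes K :: nat and m_lo m_hi :: real
  assumes "K \<ge> 1" and "0 < m_lo" and "m_lo \<le> m_hi"
  shows "\<exists>L1 L2. L1 > 0 \<and> L2 > 0 \<and>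
    (\<forall>(n::nat) (G::real mat) (Gt::real mat).
       G \<in> carrier_mat n K \<longrightarrow> Gt \<in> carrier_mat n K \<longrightarrow>
       loewner_le (m_lo \<cdot>\<^sub>m 1\<^sub>m K) ((1 / real n) \<cdot>\<^sub>m (transpose_mat G * G)) \<longrightarrow>
       loewner_le ((1 / real n) \<cdot>\<^sub>m (transpose_mat G * G)) (m_hi \<cdot>\<^sub>m 1\<^sub>m K) \<longrightarrow>
       loewner_le (m_lo \<cdot>\<^sub>m 1\<^sub>m K) ((1 / real n) \<cdot>\<^sub>m (transpose_mat Gt * Gt)) \<longrightarrow>
       loewner_le ((1 / real n) \<cdot>\<^sub>m (transpose_mat Gt * Gt)) (m_hi \<cdot>\<^sub>m 1\<^sub>m K) \<longrightarrow>
       frob_norm (inv_sqrt_mat (transpose_mat G * G) - inv_sqrt_mat (transpose_mat Gt * Gt))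
         \<le> L1 / real n * frob_norm (G - Gt) \<and>
       frob_norm (G * inv_sqrt_mat (transpose_mat G * G) - Gt * inv_sqrt_mat (transpose_mat Gt * Gt))
         \<le> L2 / sqrt (real n) * frob_norm (G - Gt))"
proof -
  show ?thesis
  proof (intro exI conjI allI impI)
    show "sqrt (m_hi / m_lo) / m_lo > 0" using assms by simp
    show "1 / sqrt m_lo + sqrt m_hi * (sqrt (m_hi / m_lo) / m_lo) > 0" using assms
      by (simp add: add_pos_nonneg)
    fix n :: nat and G Gt :: "real mat"
    assume h: "G \<in> carrier_mat n K" "Gt \<in> carrier_mat n K"
      "loewner_le (m_lo \<cdot>\<^sub>m 1\<^sub>m K) ((1 / real n) \<cdot>\<^sub>m (transpose_mat G * G))"
      "loewner_le ((1 / real n) \<cdot>\<^sub>m (transpose_mat G * G)) (m_hi \<cdot>\<^sub>m 1\<^sub>m K)"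
      "loewner_le (m_lo \<cdot>\<^sub>m 1\<^sub>m K) ((1 / real n) \<cdot>\<^sub>m (transpose_mat Gt * Gt))"
      "loewner_le ((1 / real n) \<cdot>\<^sub>m (transpose_mat Gt * Gt)) (m_hi \<cdot>\<^sub>m 1\<^sub>m K)"
    note mb = main_bound[OF assms h]
    show "frob_norm (inv_sqrt_mat (transpose_mat G * G) - inv_sqrt_mat (transpose_mat Gt * Gt))
         \<le> sqrt (m_hi / m_lo) / m_lo / real n * frob_norm (G - Gt)" using mb by blast
    show "frob_norm (G * inv_sqrt_mat (transpose_mat G * G) - Gt * inv_sqrt_mat (transpose_mat Gt * Gt))
         \<le> (1 / sqrt m_lo + sqrt m_hi * (sqrt (m_hi / m_lo) / m_lo)) / sqrt (real n) * frob_norm (G - Gt)"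
      using mb by blast
  qed
qed

end
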